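(* Let $X$ be a real Banach space. Then $\operatorname{sm}(B_X)\in\{0,1\}$.
   Context: $B_X$ is the closed unit ball of $X$. A bounded sequence $(y_k)$ generates an $\ell_1$-spreading model with $\delta>0$ if $\|\sum_{i\in F}\alpha_i y_i\|\ge\delta\sum_{i\in F}|\alpha_i|$ for every finite $F\subset\mathbb N$ with $\#F\le\min F$ and all real scalars $(\alpha_i)_{i\in F}$. For a bounded set $A$, $\operatorname{sm}(A)=\sup\{\delta>0: \exists (x_k)\subset A,\ x_k\to x\text{ weakly for some }x\in X,\ (x_k-x)\text{ generates an }\ell_1\text{-spreading model with }\delta\}$, with the convention $\sup\emptyset=0$. *)

theory Defs
  imports "HOL-Analysis.Analysis"
begin

definition weakly_tendsto :: "(nat \<Rightarrow> 'a::real_normed_vector) \<Rightarrow> 'a \<Rightarrow> bool" where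
  "weakly_tendsto x l \<longleftrightarrow>
     (\<forall>f :: 'a \<Rightarrow> real. bounded_linear f \<longrightarrow> (\<lambda>k. f (x k)) \<longlonglongrightarrow> f l)"

text \<open>The paper indexes sequences by N = {1,2,...}; here y k stands for y_(k+1),
  so the condition #F <= min F becomes card F <= Min F + 1.\<close>
definition l1_spreading_model :: "(nat \<Rightarrow> 'a::real_normed_vector) \<Rightarrow> real \<Rightarrow> bool" where
  "l1_spreading_model y \<delta> \<longleftrightarrow> \<delta> > 0 \<and> bounded (range y) \<and>
     (\<forall>F \<alpha>. finite F \<and> F \<noteq> {} \<and> card F \<le> Min F + 1 \<longrightarrow>
        \<delta> * (\<Sum>i\<in>F. \<bar>\<alpha> i\<bar>) \<le> norm (\<Sum>i\<in>F. \<alpha> i *\<^sub>R y i))"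

definition sm_set :: "'a::real_normed_vector set \<Rightarrow> real set" where
  "sm_set A = {\<delta>. \<delta> > 0 \<and> (\<exists>x l. range x \<subseteq> A \<and> weakly_tendsto x l \<and>
                  l1_spreading_model (\<lambda>k. x k - l) \<delta>)}"

definition sm :: "'a::real_normed_vector set \<Rightarrow> real" where
  "sm A = (if sm_set A = {} then 0 else Sup (sm_set A))"

end

theory Submission
  imports Defs
begin

lemma boost:
  fixes y :: "nat \<Rightarrow> 'a::real_normed_vector"
  assumes sp: "l1_spreading_model y \<delta>"
    and wk: "\<And>f::'a \<Rightarrow> real. bounded_linear f \<Longrightarrow> (\<lambda>k. f (y k)) \<longlonglongrightarrow> 0"
    and th0: "0 < \<theta>" and th1: "\<theta> < 1"
  shows "\<exists>w::nat \<Rightarrow> 'a. range w \<subseteq> cball 0 1 \<and> weakly_tendsto w 0 \<and> l1_spreading_model (\<lambda>k. w k - 0) (\<theta>\<^sup>2)"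
proof -
  have d0: "\<delta> > 0" and bd: "bounded (range y)" and spr:
    "\<And>F \<alpha>. finite F \<Longrightarrow> F \<noteq> {} \<Longrightarrow> card F \<le> Min F + 1 \<Longrightarrow>
        \<delta> * (\<Sum>i\<in>F. \<bar>\<alpha> i\<bar>) \<le> norm (\<Sum>i\<in>F. \<alpha> i *\<^sub>R y i)"
    using sp unfolding l1_spreading_model_def by auto
  obtain B where B: "\<And>k. norm (y k) \<le> B"
    using bd unfolding bounded_iff by auto
  define P where "P n T r \<longleftrightarrow> (\<forall>F c. finite F \<and> F \<noteq> {} \<and> F \<subseteq> {n..} \<and> card F \<le> T \<longrightarrow>
       r * (\<Sum>i\<in>F. \<bar>c i\<bar>) \<le> norm (\<Sum>i\<in>F. c i *\<^sub>R y i))" for n T r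
  have Pmono: "P n' T r'" if "P n T r" "n \<le> n'" "r' \<le> r" for n n' T r r'
    unfolding P_def
  proof (intro allI impI)
    fix F c assume h: "finite F \<and> F \<noteq> {} \<and> F \<subseteq> {n'..} \<and> card F \<le> T"
    then have "r * (\<Sum>i\<in>F. \<bar>c i\<bar>) \<le> norm (\<Sum>i\<in>F. c i *\<^sub>R y i)"
      using that(1,2) unfolding P_def by (meson atLeast_subset_iff order_trans)
    moreover have "r' * (\<Sum>i\<in>F. \<bar>c i\<bar>) \<le> r * (\<Sum>i\<in>F. \<bar>c i\<bar>)"
      using that(3) by (simp add: mult_right_mono sum_nonneg)
    ultimately show "r' * (\<Sum>i\<in>F. \<bar>c i\<bar>) \<le> norm (\<Sum>i\<in>F. c i *\<^sub>R y i)" by linarith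
  qed
  have Puse: "r * (\<Sum>i\<in>F. \<bar>c i\<bar>) \<le> norm (\<Sum>i\<in>F. c i *\<^sub>R y i)"
    if "P n T r" "finite F" "F \<noteq> {}" "F \<subseteq> {n..}" "card F \<le> T" for n T r F c
    using that unfolding P_def by blast
  have Pbound: "r \<le> B" if "P n T r" "T \<ge> 1" for n T r
  proof -
    have "finite {n} \<and> {n} \<noteq> {} \<and> {n} \<subseteq> {n..} \<and> card {n} \<le> T" using that(2) by auto
    then have "r * (\<Sum>i\<in>{n}. \<bar>(\<lambda>_. 1::real) i\<bar>) \<le> norm (\<Sum>i\<in>{n}. (\<lambda>_. 1::real) i *\<^sub>R y i)"
      using Puse[OF that(1), of "{n}" "\<lambda>_. 1"] by blast
    then show ?thesis using B[of n] by simp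
  qed
  have Pdelta: "P T T \<delta>" for T
    unfolding P_def
  proof (intro allI impI)
    fix F and c :: "nat \<Rightarrow> real" assume h: "finite F \<and> F \<noteq> {} \<and> F \<subseteq> {T..} \<and> card F \<le> T"
    then have "T \<le> Min F" by auto
    then have "card F \<le> Min F + 1" using h by linarith
    then show "\<delta> * (\<Sum>i\<in>F. \<bar>c i\<bar>) \<le> norm (\<Sum>i\<in>F. c i *\<^sub>R y i)" using spr h by blast
  qed
  define M where "M T = Sup {r. \<exists>n. P n T r}" for T
  have Mset: "{r. \<exists>n. P n T r} \<noteq> {}" "bdd_above {r. \<exists>n. P n T r}" if "T \<ge> 1" for T
    using Pdelta[of T] Pbound that unfolding bdd_above_def by blast+
  have dM: "\<delta> \<le> M T" if "T \<ge> 1" for T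
    unfolding M_def using Mset[OF that] Pdelta[of T] by (intro cSup_upper) auto
  define \<mu> where "\<mu> = Inf (M ` {1..})"
  have Mne: "M ` {1..} \<noteq> {}" by auto
  have Mbb: "bdd_below (M ` {1..})" using dM unfolding bdd_below_def by auto
  have dmu: "\<delta> \<le> \<mu>" unfolding \<mu>_def using Mne dM by (intro cInf_greatest) auto
  have muM: "\<mu> \<le> M T" if "T \<ge> 1" for T
    unfolding \<mu>_def using Mbb that by (intro cInf_lower) auto
  have mu0: "\<mu> > 0" using d0 dmu by linarith
  have ex_nn: "\<exists>n. P n T (\<mu> * \<theta>)" if T1: "T \<ge> 1" for T
  proof -
    have "\<mu> * \<theta> < \<mu>" using mu0 th1 by simp
    then have "\<mu> * \<theta> < M T" using muM[OF that] by linarith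
    then obtain r where "r \<in> {r. \<exists>n. P n T r}" "\<mu> * \<theta> < r"
      unfolding M_def using less_cSup_iff[OF Mset(1)[OF T1] Mset(2)[OF T1]] by blast
    then obtain n where "P n T r" by auto
    then show ?thesis using Pmono[of n T r n "\<mu> * \<theta>"] \<open>\<mu> * \<theta> < r\<close> by auto
  qed
  define nn where "nn T = (SOME n. P n T (\<mu> * \<theta>))" for T
  have nn: "P (nn T) T (\<mu> * \<theta>)" if "T \<ge> 1" for T
    unfolding nn_def using ex_nn[OF that] by (rule someI_ex)
  have "\<mu> < \<mu> / \<theta>" using mu0 th0 th1 by (simp add: less_divide_eq)
  then obtain S where S1: "S \<ge> 1" and MS: "M S < \<mu> / \<theta>"
    using cInf_less_iff[OF Mne Mbb] unfolding \<mu>_def by auto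
  have notP: "\<not> P n S (\<mu> / \<theta>)" for n
  proof
    assume "P n S (\<mu> / \<theta>)"
    then have "\<mu> / \<theta> \<le> M S" unfolding M_def using Mset[OF S1] by (intro cSup_upper) auto
    then show False using MS by simp
  qed
  have blk: "\<exists>F c. finite F \<and> F \<noteq> {} \<and> F \<subseteq> {n..} \<and> card F \<le> S \<and> (\<Sum>i\<in>F. \<bar>c i\<bar>) = 1
      \<and> norm (\<Sum>i\<in>F. c i *\<^sub>R y i) < \<mu> / \<theta>" for n
  proof -
    obtain F c where F: "finite F" "F \<noteq> {}" "F \<subseteq> {n..}" "card F \<le> S"
      and lt: "\<mu> / \<theta> * (\<Sum>i\<in>F. \<bar>c i\<bar>) > norm (\<Sum>i\<in>F. c i *\<^sub>R y i)"
      using notP[of n] unfolding P_def by (auto simp: not_le)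
    define s where "s = (\<Sum>i\<in>F. \<bar>c i\<bar>)"
    have "s \<ge> 0" unfolding s_def by (simp add: sum_nonneg)
    moreover have "s \<noteq> 0" using lt unfolding s_def[symmetric] by auto
    ultimately have s0: "s > 0" by simp
    define c' where "c' i = c i / s" for i
    have "(\<Sum>i\<in>F. \<bar>c' i\<bar>) = 1" unfolding c'_def using s0
      by (simp add: s_def[symmetric] sum_divide_distrib[symmetric])
    moreover have "(\<Sum>i\<in>F. c' i *\<^sub>R y i) = (1/s) *\<^sub>R (\<Sum>i\<in>F. c i *\<^sub>R y i)"
      unfolding c'_def by (simp add: scaleR_sum_right divide_inverse mult.commute)
    then have "norm (\<Sum>i\<in>F. c' i *\<^sub>R y i) = norm (\<Sum>i\<in>F. c i *\<^sub>R y i) / s"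
      using s0 by simp
    moreover have "norm (\<Sum>i\<in>F. c i *\<^sub>R y i) / s < \<mu> / \<theta>"
      using lt s0 unfolding s_def[symmetric] by (simp add: divide_less_eq)
    ultimately show ?thesis using F by metis
  qed
  define Q where "Q n F c \<longleftrightarrow> finite F \<and> F \<noteq> {} \<and> F \<subseteq> {n..} \<and> card F \<le> S
      \<and> (\<Sum>i\<in>F. \<bar>c i\<bar>) = 1 \<and> norm (\<Sum>i\<in>F. c i *\<^sub>R y i) < \<mu> / \<theta>" for n F and c :: "nat \<Rightarrow> real"
  define Fc where "Fc n = (SOME Fc. Q n (fst Fc) (snd Fc))" for n
  define Fb where "Fb n = fst (Fc n)" for n
  define cb where "cb n = snd (Fc n)" for n
  have Fb: "Q n (Fb n) (cb n)" for n
  proof -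
    have "\<exists>Fc. Q n (fst Fc) (snd Fc)" using blk[of n] unfolding Q_def by auto
    then show ?thesis unfolding Fb_def cb_def Fc_def by (rule someI_ex)
  qed
  define q where "q j = max (nn (Suc j * S)) (Suc j * S)" for j
  define p where "p = rec_nat (q 0) (\<lambda>j pj. max (q (Suc j)) (Max (Fb pj) + 1))"
  have p0: "p 0 = q 0" unfolding p_def by simp
  have pS: "p (Suc j) = max (q (Suc j)) (Max (Fb (p j)) + 1)" for j
    unfolding p_def by simp
  have qp: "q j \<le> p j" for j by (cases j) (simp_all add: p0 pS)
  have Fbp: "finite (Fb (p j))" "Fb (p j) \<noteq> {}" "Fb (p j) \<subseteq> {p j..}" "card (Fb (p j)) \<le> S"
     "(\<Sum>i\<in>Fb (p j). \<bar>cb (p j) i\<bar>) = 1" "norm (\<Sum>i\<in>Fb (p j). cb (p j) i *\<^sub>R y i) < \<mu> / \<theta>" for j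
    using Fb[of "p j"] unfolding Q_def by auto
  have ltS: "i < p (Suc j)" if "i \<in> Fb (p j)" for i j
  proof -
    have "i \<le> Max (Fb (p j))" using Fbp(1) that by simp
    then show ?thesis unfolding pS by simp
  qed
  have geP: "p j \<le> i" if "i \<in> Fb (p j)" for i j using Fbp(3) that by auto
  have smp: "strict_mono p" unfolding strict_mono_Suc_iff
  proof
    fix j
    obtain i where "i \<in> Fb (p j)" using Fbp(2) by blast
    then show "p j < p (Suc j)" using ltS geP by (meson le_less_trans)
  qed
  have disj0: "Fb (p j) \<inter> Fb (p k) = {}" if "j < k" for j k
  proof (rule ccontr)
    assume "Fb (p j) \<inter> Fb (p k) \<noteq> {}"
    then obtain i where i: "i \<in> Fb (p j)" "i \<in> Fb (p k)" by blast
    have "Suc j \<le> k" using that by simp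
    then have "p (Suc j) \<le> p k" using strict_mono_less_eq[OF smp] by blast
    then show False using ltS[OF i(1)] geP[OF i(2)] by linarith
  qed
  have disj: "Fb (p j) \<inter> Fb (p k) = {}" if "j \<noteq> k" for j k
    using disj0[of j k] disj0[of k j] that by (metis Int_commute nat_neq_iff)
  define u where "u j = (\<Sum>i\<in>Fb (p j). cb (p j) i *\<^sub>R y i)" for j
  define w where "w j = (\<theta> / \<mu>) *\<^sub>R u j" for j
  have wn: "norm (w j) < 1" for j
  proof -
    have "norm (w j) = \<theta> / \<mu> * norm (u j)" unfolding w_def using th0 mu0 by simp
    also have "\<dots> < \<theta> / \<mu> * (\<mu> / \<theta>)" using Fbp(6)[of j] th0 mu0 unfolding u_def
      by (intro mult_strict_left_mono) auto
    also have "\<dots> = 1" using th0 mu0 by simp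
    finally show ?thesis .
  qed
  have key: "\<mu> * \<theta> * (\<Sum>j\<in>G. \<bar>b j\<bar>) \<le> norm (\<Sum>j\<in>G. b j *\<^sub>R u j)"
    if G: "finite G" "G \<noteq> {}" "card G \<le> Min G + 1" for G and b :: "nat \<Rightarrow> real"
  proof -
    define g0 where "g0 = Min G"
    define U where "U = (\<Union>j\<in>G. Fb (p j))"
    define c where "c i = (\<Sum>j\<in>G. if i \<in> Fb (p j) then b j * cb (p j) i else 0)" for i
    have cval: "c i = b k * cb (p k) i" if "k \<in> G" "i \<in> Fb (p k)" for k i
    proof -
      have "c i = (\<Sum>j\<in>G. if j = k then b k * cb (p k) i else 0)"
        unfolding c_def using disj that by (intro sum.cong) auto
      also have "\<dots> = b k * cb (p k) i" using that G(1) by simp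
      finally show ?thesis .
    qed
    have dj: "\<forall>i\<in>G. \<forall>j\<in>G. i \<noteq> j \<longrightarrow> Fb (p i) \<inter> Fb (p j) = {}" using disj by blast
    have fin: "\<forall>i\<in>G. finite (Fb (p i))" using Fbp(1) by blast
    have s1: "(\<Sum>i\<in>U. c i *\<^sub>R y i) = (\<Sum>j\<in>G. b j *\<^sub>R u j)"
    proof -
      have "(\<Sum>i\<in>U. c i *\<^sub>R y i) = (\<Sum>j\<in>G. \<Sum>i\<in>Fb (p j). c i *\<^sub>R y i)"
        unfolding U_def by (rule sum.UNION_disjoint[OF G(1) fin dj])
      also have "\<dots> = (\<Sum>j\<in>G. b j *\<^sub>R u j)"
        unfolding u_def scaleR_sum_right
        by (intro sum.cong refl) (simp add: cval)
      finally show ?thesis .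
    qed
    have s2: "(\<Sum>i\<in>U. \<bar>c i\<bar>) = (\<Sum>j\<in>G. \<bar>b j\<bar>)"
    proof -
      have "(\<Sum>i\<in>U. \<bar>c i\<bar>) = (\<Sum>j\<in>G. \<Sum>i\<in>Fb (p j). \<bar>c i\<bar>)"
        unfolding U_def by (rule sum.UNION_disjoint[OF G(1) fin dj])
      also have "\<dots> = (\<Sum>j\<in>G. \<bar>b j\<bar> * (\<Sum>i\<in>Fb (p j). \<bar>cb (p j) i\<bar>))"
        unfolding sum_distrib_left
        by (intro sum.cong refl) (simp add: cval abs_mult)
      also have "\<dots> = (\<Sum>j\<in>G. \<bar>b j\<bar>)" using Fbp(5) by simp
      finally show ?thesis .
    qed
    have g0G: "g0 \<in> G" unfolding g0_def using G by simp
    have Ug: "U \<subseteq> {p g0..}"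
    proof
      fix i assume "i \<in> U"
      then obtain j where j: "j \<in> G" "i \<in> Fb (p j)" unfolding U_def by blast
      have "g0 \<le> j" unfolding g0_def using G(1) j(1) by simp
      then have "p g0 \<le> p j" using strict_mono_less_eq[OF smp] by blast
      then show "i \<in> {p g0..}" using geP[OF j(2)] by simp
    qed
    have "card U \<le> (\<Sum>j\<in>G. card (Fb (p j)))" unfolding U_def by (rule card_UN_le[OF G(1)])
    also have "\<dots> \<le> card G * S" using sum_bounded_above[of G "\<lambda>j. card (Fb (p j))" S] Fbp(4) by simp
    also have "\<dots> \<le> Suc g0 * S" using G(3) unfolding g0_def by (intro mult_le_mono1) simp
    finally have cU: "card U \<le> Suc g0 * S" .
    have finU: "finite U" unfolding U_def using G(1) fin by blast
    have neU: "U \<noteq> {}" unfolding U_def using g0G Fbp(2) by blast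
    have T1: "Suc g0 * S \<ge> 1" using S1 by simp
    have "nn (Suc g0 * S) \<le> p g0" using qp[of g0] unfolding q_def by simp
    then have PP: "P (p g0) (Suc g0 * S) (\<mu> * \<theta>)" using Pmono[OF nn[OF T1]] by blast
    have "\<mu> * \<theta> * (\<Sum>i\<in>U. \<bar>c i\<bar>) \<le> norm (\<Sum>i\<in>U. c i *\<^sub>R y i)"
      by (rule Puse[OF PP finU neU Ug cU])
    then show ?thesis unfolding s1 s2 .
  qed
  have spw: "l1_spreading_model (\<lambda>k. w k - 0) (\<theta>\<^sup>2)"
    unfolding l1_spreading_model_def
  proof (intro conjI allI impI)
    show "0 < \<theta>\<^sup>2" using th0 by simp
    show "bounded (range (\<lambda>k. w k - 0))" unfolding bounded_iff using wn less_imp_le by auto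
    fix F and \<alpha> :: "nat \<Rightarrow> real" assume h: "finite F \<and> F \<noteq> {} \<and> card F \<le> Min F + 1"
    have "(\<Sum>i\<in>F. \<alpha> i *\<^sub>R (w i - 0)) = (\<theta> / \<mu>) *\<^sub>R (\<Sum>i\<in>F. \<alpha> i *\<^sub>R u i)"
      unfolding w_def by (simp add: scaleR_sum_right mult.commute)
    then have eq: "norm (\<Sum>i\<in>F. \<alpha> i *\<^sub>R (w i - 0)) = \<theta> / \<mu> * norm (\<Sum>i\<in>F. \<alpha> i *\<^sub>R u i)"
      using th0 mu0 by simp
    have "\<theta>\<^sup>2 * (\<Sum>i\<in>F. \<bar>\<alpha> i\<bar>) = \<theta> / \<mu> * (\<mu> * \<theta> * (\<Sum>i\<in>F. \<bar>\<alpha> i\<bar>))"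
      using mu0 by (simp add: power2_eq_square)
    also have "\<dots> \<le> \<theta> / \<mu> * norm (\<Sum>i\<in>F. \<alpha> i *\<^sub>R u i)"
      using key[of F \<alpha>] h th0 mu0 by (intro mult_left_mono) auto
    finally show "\<theta>\<^sup>2 * (\<Sum>i\<in>F. \<bar>\<alpha> i\<bar>) \<le> norm (\<Sum>i\<in>F. \<alpha> i *\<^sub>R (w i - 0))"
      unfolding eq .
  qed
  have weak: "weakly_tendsto w 0" unfolding weakly_tendsto_def
  proof (intro allI impI)
    fix f :: "'a \<Rightarrow> real" assume f: "bounded_linear f"
    interpret f: bounded_linear f by fact
    have fy: "(\<lambda>k. f (y k)) \<longlonglongrightarrow> 0" by (rule wk[OF f])
    have fw: "f (w j) = \<theta> / \<mu> * (\<Sum>i\<in>Fb (p j). cb (p j) i * f (y i))" for j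
      unfolding w_def u_def by (simp add: f.scaleR f.sum)
    show "(\<lambda>k. f (w k)) \<longlonglongrightarrow> f 0"
    proof (rule LIMSEQ_I)
      fix e :: real assume e: "0 < e"
      define \<eta> where "\<eta> = e * \<mu> / (2 * \<theta>)"
      have eta: "\<eta> > 0" unfolding \<eta>_def using e mu0 th0 by simp
      obtain N where N: "\<And>i. i \<ge> N \<Longrightarrow> norm (f (y i) - 0) < \<eta>"
        using LIMSEQ_D[OF fy eta] by auto
      show "\<exists>N. \<forall>n\<ge>N. norm (f (w n) - f 0) < e"
      proof (intro exI allI impI)
        fix n assume n: "N \<le> n"
        have "N \<le> p n" using n seq_suble[OF smp, of n] by linarith
        then have small: "\<bar>f (y i)\<bar> \<le> \<eta>" if "i \<in> Fb (p n)" for i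
          using N[of i] geP[OF that] by simp
        have "\<bar>\<Sum>i\<in>Fb (p n). cb (p n) i * f (y i)\<bar> \<le> (\<Sum>i\<in>Fb (p n). \<bar>cb (p n) i\<bar> * \<eta>)"
          by (rule order_trans[OF sum_abs]) (auto simp: abs_mult intro!: sum_mono mult_left_mono small)
        also have "\<dots> = \<eta>" using Fbp(5)[of n] by (simp add: sum_distrib_right[symmetric])
        finally have "\<bar>f (w n)\<bar> \<le> \<theta> / \<mu> * \<eta>" unfolding fw using th0 mu0
          by (simp add: abs_mult divide_right_mono mult_left_mono)
        also have "\<dots> = e / 2" unfolding \<eta>_def using th0 mu0 by (simp add: field_simps)
        finally show "norm (f (w n) - f 0) < e" using e by simp
      qed
    qed
  qed
  have rw: "range w \<subseteq> cball 0 1" using wn by (simp add: image_subset_iff mem_cball_0 less_imp_le)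
  show ?thesis by (rule exI[of _ w]) (simp only: rw spw weak simp_thms)
qed

lemma sm_ub:
  assumes "\<delta> \<in> sm_set (cball (0::'a::real_normed_vector) 1)"
  shows "0 < \<delta> \<and> \<delta> \<le> 1"
proof -
  have "\<exists>x l. range x \<subseteq> cball (0::'a) 1 \<and> weakly_tendsto x l \<and> l1_spreading_model (\<lambda>k. x k - l) \<delta>"
    using assms unfolding sm_set_def mem_Collect_eq by (rule conjunct2)
  then obtain x l where xl: "range x \<subseteq> cball (0::'a) 1 \<and> weakly_tendsto x l \<and> l1_spreading_model (\<lambda>k. x k - l) \<delta>"
    by iprover
  have x: "norm (x i) \<le> 1" for i using xl by (auto simp: image_subset_iff)
  have sp: "l1_spreading_model (\<lambda>k. x k - l) \<delta>" using xl by simp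
  have d0: "0 < \<delta>" using assms unfolding sm_set_def by simp
  define \<alpha> :: "nat \<Rightarrow> real" where "\<alpha> i = (if i = 1 then 1 else -1)" for i
  have "\<delta> * (\<Sum>i\<in>{1,2}. \<bar>\<alpha> i\<bar>) \<le> norm (\<Sum>i\<in>{1::nat,2}. \<alpha> i *\<^sub>R (x i - l))"
    using sp unfolding l1_spreading_model_def by (elim conjE allE[of _ "{1,2}"] allE[of _ \<alpha>]) auto
  then have "2 * \<delta> \<le> norm (x 1 - x 2)" by (simp add: \<alpha>_def algebra_simps)
  also have "\<dots> \<le> norm (x 1) + norm (x 2)" by (rule norm_triangle_ineq4)
  also have "\<dots> \<le> 2" using x[of 1] x[of 2] by simp
  finally show ?thesis using d0 by simp
qed

theorem lemma5p3:
  shows "sm (cball (0::'a::banach) 1) \<in> {0, 1}"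
proof (cases "sm_set (cball (0::'a) 1) = {}")
  case True
  then show ?thesis unfolding sm_def by simp
next
  case False
  let ?A = "sm_set (cball (0::'a) 1)"
  obtain \<delta> where d: "\<delta> \<in> ?A" using False by blast
  then have "\<exists>x l. range x \<subseteq> cball (0::'a) 1 \<and> weakly_tendsto x l \<and> l1_spreading_model (\<lambda>k. x k - l) \<delta>"
    unfolding sm_set_def mem_Collect_eq by (rule conjunct2)
  then obtain x l where xl: "range x \<subseteq> cball (0::'a) 1 \<and> weakly_tendsto x l \<and> l1_spreading_model (\<lambda>k. x k - l) \<delta>"
    by iprover
  have wl: "weakly_tendsto x l" and sp: "l1_spreading_model (\<lambda>k. x k - l) \<delta>"
    using xl by simp_all
  have wk: "(\<lambda>k. f (x k - l)) \<longlonglongrightarrow> 0" if f: "bounded_linear f" for f :: "'a \<Rightarrow> real"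
  proof -
    interpret f: bounded_linear f by fact
    have "(\<lambda>k. f (x k)) \<longlonglongrightarrow> f l" using wl f unfolding weakly_tendsto_def by simp
    then have "(\<lambda>k. f (x k) - f l) \<longlonglongrightarrow> f l - f l" by (intro tendsto_diff tendsto_const)
    then show ?thesis by (simp add: f.diff)
  qed
  have inA: "\<theta>\<^sup>2 \<in> ?A" if th: "0 < \<theta>" "\<theta> < 1" for \<theta>
  proof -
    obtain w where w1: "range w \<subseteq> cball (0::'a) 1" and w2: "weakly_tendsto w 0" and w3: "l1_spreading_model (\<lambda>k. w k - 0) (\<theta>\<^sup>2)"
      using boost[OF sp wk th] by iprover
    have pos: "0 < \<theta>\<^sup>2" using th by simp
    show ?thesis unfolding sm_set_def mem_Collect_eq
      by (intro conjI exI[of _ w] exI[of _ "0::'a"] w1 w2 w3 pos)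
  qed
  have bdd: "bdd_above ?A" unfolding bdd_above_def by (intro exI[of _ 1] ballI) (erule sm_ub[THEN conjunct2])
  have le1: "Sup ?A \<le> 1" using False sm_ub by (intro cSup_least) auto
  have ge: "\<delta> \<le> Sup ?A" using d bdd by (rule cSup_upper)
  have "Sup ?A \<ge> 1"
  proof (rule ccontr)
    assume "\<not> Sup ?A \<ge> 1"
    then have s1: "Sup ?A < 1" by simp
    have s0: "0 < Sup ?A" using ge sm_ub[OF d] by linarith
    define \<theta> where "\<theta> = sqrt ((Sup ?A + 1) / 2)"
    have t0: "0 < \<theta>" unfolding \<theta>_def using s0 by simp
    have t1: "\<theta> < 1" unfolding \<theta>_def using s1 real_sqrt_less_iff[of "(Sup ?A + 1) / 2" 1] by simp
    have "\<theta>\<^sup>2 = (Sup ?A + 1) / 2" unfolding \<theta>_def using s0 by simp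
    moreover have "\<theta>\<^sup>2 \<le> Sup ?A" using inA[OF t0 t1] bdd by (rule cSup_upper)
    ultimately have "(Sup ?A + 1) / 2 \<le> Sup ?A" by simp
    then show False using s1 by simp
  qed
  then have eq: "Sup ?A = 1" using le1 by linarith
  have "sm (cball (0::'a) 1) = 1" unfolding sm_def using False eq by (simp only: if_False)
  then show ?thesis by (simp only: insert_iff simp_thms)
qed

end
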